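(* Let $N\ge1$, $1\le a\le N$ and $p\ge0$ be integers. For integers $q_1,\dots,q_N$ set $C_2(q_1,\dots,q_N)=\sum_{j=1}^N s_j(s_j-2j)$ with $s_j=q_j-\frac1N\sum_{k=1}^N q_k$. Then for all integers $p_1\ge p_2\ge\dots\ge p_a\ge0$ with $\sum_{i=1}^a p_i=ap$, $$C_2(p_1,\dots,p_a,0,\dots,0)-C_2(\underbrace{p,\dots,p}_{a},0,\dots,0)\ge0,$$ with equality if and only if $p_i=p$ for all $i=1,\dots,a$.
   Context: Here $(p_1,\dots,p_a,0,\dots,0)$ and $(p,\dots,p,0,\dots,0)$ denote $N$-tuples padded with zeros. *)

theory Defs
  imports Complex_Main
begin

text \<open>An N-tuple of integers is represented as a function q :: nat => int,
  whose entries q 1, ..., q N are relevant.\<close>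

definition shifted :: "nat \<Rightarrow> (nat \<Rightarrow> int) \<Rightarrow> nat \<Rightarrow> real" where
  "shifted N q j = real_of_int (q j) - (\<Sum>k=1..N. real_of_int (q k)) / real N"

definition C2 :: "nat \<Rightarrow> (nat \<Rightarrow> int) \<Rightarrow> real" where
  "C2 N q = (\<Sum>j=1..N. shifted N q j * (shifted N q j - 2 * real j))"

definition pad :: "nat \<Rightarrow> (nat \<Rightarrow> int) \<Rightarrow> nat \<Rightarrow> int" where
  "pad a P j = (if 1 \<le> j \<and> j \<le> a then P j else 0)"

end

theory Submission
  imports Defs
begin

lemma C2_diff:
  assumes "(\<Sum>k=1..N. q k) = (\<Sum>k=1..N. r k)"
  shows "C2 N q - C2 N r = (\<Sum>j=1..N. real_of_int ((q j)^2 - (r j)^2 - 2 * int j * (q j - r j)))"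
proof -
  define m where "m = (\<Sum>k=1..N. real_of_int (q k)) / real N"
  have m2: "m = (\<Sum>k=1..N. real_of_int (r k)) / real N"
    unfolding m_def using assms by (metis of_int_sum)
  have sq: "shifted N q j = q j - m" "shifted N r j = r j - m" for j
    unfolding shifted_def m_def using m2 m_def by auto
  have "C2 N q - C2 N r = (\<Sum>j=1..N. (q j - m) * (q j - m - 2 * j) - (r j - m) * (r j - m - 2 * j))"
    unfolding C2_def sq by (simp add: sum_subtractf)
  also have "\<dots> = (\<Sum>j=1..N. real_of_int ((q j)^2 - (r j)^2 - 2 * int j * (q j - r j)) - 2 * m * (q j - r j))"
    by (rule sum.cong) (auto simp: algebra_simps power2_eq_square)
  also have "\<dots> = (\<Sum>j=1..N. real_of_int ((q j)^2 - (r j)^2 - 2 * int j * (q j - r j))) - 2 * m * (\<Sum>j=1..N. real_of_int (q j - r j))"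
    by (simp add: sum_subtractf sum_distrib_left del: of_int_diff)
  also have "(\<Sum>j=1..N. real_of_int (q j - r j)) = 0"
  proof -
    have "(\<Sum>j=1..N. real_of_int (q j - r j)) = real_of_int (\<Sum>j=1..N. (q j - r j))"
      by (simp only: of_int_sum)
    also have "(\<Sum>j=1..N. (q j - r j)) = 0" using assms by (simp add: sum_subtractf)
    finally show ?thesis by simp
  qed
  finally show ?thesis by simp
qed


lemma mono_chain:
  fixes d :: "nat \<Rightarrow> int"
  assumes "\<And>i. 1 \<le> i \<Longrightarrow> i < a \<Longrightarrow> d i \<ge> d (Suc i)"
    and "1 \<le> j" "j \<le> k" "k \<le> a"
  shows "d k \<le> d j"
  using assms(3,4)
proof (induction k rule: dec_induct)
  case base then show ?case by simp
next
  case (step n)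
  then show ?case using assms(1)[of n] assms(2) by simp
qed

lemma cheb:
  fixes d :: "nat \<Rightarrow> int"
  assumes "\<And>i. 1 \<le> i \<Longrightarrow> i < a \<Longrightarrow> d i \<ge> d (Suc i)"
    and "(\<Sum>i=1..a. d i) = 0"
  shows "(\<Sum>j=1..a. int j * d j) \<le> 0"
proof -
  have t: "(int j - int k) * (d j - d k) \<le> 0" if "j \<in> {1..a}" "k \<in> {1..a}" for j k
  proof (cases "j \<le> k")
    case True
    then have "d k \<le> d j" using mono_chain[where a=a and d=d, OF assms(1)] that by auto
    then show ?thesis using True by (simp add: mult_nonpos_nonneg)
  next
    case False
    then have "d j \<le> d k" using mono_chain[where a=a and d=d, OF assms(1)] that by auto
    then show ?thesis using False by (simp add: mult_nonneg_nonpos)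
  qed
  have "(\<Sum>j=1..a. \<Sum>k=1..a. (int j - int k) * (d j - d k)) \<le> 0"
    using t by (intro sum_nonpos) auto
  moreover have "(\<Sum>j=1..a. \<Sum>k=1..a. (int j - int k) * (d j - d k))
     = 2 * int a * (\<Sum>j=1..a. int j * d j)"
  proof -
    have "(\<Sum>j=1..a. \<Sum>k=1..a. (int j - int k) * (d j - d k))
      = (\<Sum>j=1..a. \<Sum>k=1..a. int j * d j + int k * d k - int j * d k - int k * d j)"
      by (auto intro!: sum.cong simp: algebra_simps)
    also have "\<dots> = (\<Sum>j=1..a. int a * (int j * d j) + (\<Sum>k=1..a. int k * d k) - int j * (\<Sum>k=1..a. d k) - d j * (\<Sum>k=1..a. int k))"
      by (auto intro!: sum.cong simp: sum.distrib sum_subtractf sum_distrib_left algebra_simps)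
    also have "\<dots> = (\<Sum>j=1..a. int a * (int j * d j) + (\<Sum>k=1..a. int k * d k) - d j * (\<Sum>k=1..a. int k))"
      using assms(2) by simp
    also have "\<dots> = int a * (\<Sum>j=1..a. int j * d j) + int a * (\<Sum>k=1..a. int k * d k) - (\<Sum>j=1..a. d j) * (\<Sum>k=1..a. int k)"
      by (simp add: sum.distrib sum_subtractf sum_distrib_left sum_distrib_right) (rule sum.swap)
    finally show ?thesis using assms(2) by simp
  qed
  ultimately have "2 * int a * (\<Sum>j=1..a. int j * d j) \<le> 0" by simp
  moreover have "a > 0 \<or> (\<Sum>j=1..a. int j * d j) = 0" by (cases a) auto
  ultimately show ?thesis by (auto simp: mult_le_0_iff)
qed

theorem mainTheorem6:
  fixes N a :: nat and p :: int and P :: "nat \<Rightarrow> int"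
  assumes "N \<ge> 1" and "1 \<le> a" and "a \<le> N" and "p \<ge> 0"
    and "\<And>i. 1 \<le> i \<Longrightarrow> i < a \<Longrightarrow> P i \<ge> P (Suc i)"
    and "P a \<ge> 0"
    and "(\<Sum>i=1..a. P i) = int a * p"
  shows "C2 N (pad a P) - C2 N (pad a (\<lambda>_. p)) \<ge> 0
    \<and> (C2 N (pad a P) - C2 N (pad a (\<lambda>_. p)) = 0 \<longleftrightarrow> (\<forall>i\<in>{1..a}. P i = p))"
proof -
  have padsum: "(\<Sum>k=1..N. pad a Q k) = (\<Sum>k=1..a. Q k)" for Q
  proof -
    have "(\<Sum>k=1..N. pad a Q k) = (\<Sum>k=1..a. pad a Q k)"
      by (rule sum.mono_neutral_right) (use assms(3) in \<open>auto simp: pad_def\<close>)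
    also have "\<dots> = (\<Sum>k=1..a. Q k)" by (auto intro!: sum.cong simp: pad_def)
    finally show ?thesis .
  qed
  define d where "d i = P i - p" for i
  have sumeq: "(\<Sum>k=1..N. pad a P k) = (\<Sum>k=1..N. pad a (\<lambda>_. p) k)"
    unfolding padsum using assms(7) by simp
  have "C2 N (pad a P) - C2 N (pad a (\<lambda>_. p))
     = (\<Sum>j=1..N. real_of_int ((pad a P j)^2 - (pad a (\<lambda>_. p) j)^2 - 2 * int j * (pad a P j - pad a (\<lambda>_. p) j)))"
    by (rule C2_diff[OF sumeq])
  also have "\<dots> = (\<Sum>j=1..a. real_of_int ((pad a P j)^2 - (pad a (\<lambda>_. p) j)^2 - 2 * int j * (pad a P j - pad a (\<lambda>_. p) j)))"
    by (rule sum.mono_neutral_right) (use assms(3) in \<open>auto simp: pad_def\<close>)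
  also have "\<dots> = real_of_int (\<Sum>j=1..a. (d j)^2 + 2 * p * d j - 2 * int j * d j)"
    unfolding of_int_sum by (auto intro!: sum.cong simp: pad_def d_def power2_eq_square algebra_simps)
  also have "(\<Sum>j=1..a. (d j)^2 + 2 * p * d j - 2 * int j * d j)
      = (\<Sum>j=1..a. (d j)^2) + 2 * p * (\<Sum>j=1..a. d j) - 2 * (\<Sum>j=1..a. int j * d j)"
    by (simp add: sum.distrib sum_subtractf sum_distrib_left algebra_simps)
  also have dsum: "(\<Sum>j=1..a. d j) = 0"
    unfolding d_def using assms(7) by (simp add: sum_subtractf)
  finally have eq: "C2 N (pad a P) - C2 N (pad a (\<lambda>_. p))
      = real_of_int ((\<Sum>j=1..a. (d j)^2) - 2 * (\<Sum>j=1..a. int j * d j))" by simp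
  have ch: "(\<Sum>j=1..a. int j * d j) \<le> 0"
    by (rule cheb[OF _ dsum]) (use assms(5) in \<open>auto simp: d_def\<close>)
  have sq: "(\<Sum>j=1..a. (d j)^2) \<ge> 0" by (simp add: sum_nonneg)
  have zero_iff: "(\<Sum>j=1..a. (d j)^2) = 0 \<longleftrightarrow> (\<forall>i\<in>{1..a}. d i = 0)"
    by (subst sum_nonneg_eq_0_iff) auto
  show ?thesis
  proof
    have "0 \<le> (\<Sum>j=1..a. (d j)^2) - 2 * (\<Sum>j=1..a. int j * d j)" using ch sq by linarith
    then show "C2 N (pad a P) - C2 N (pad a (\<lambda>_. p)) \<ge> 0" unfolding eq by (simp only: of_int_0_le_iff)
  next
    show "(C2 N (pad a P) - C2 N (pad a (\<lambda>_. p)) = 0) = (\<forall>i\<in>{1..a}. P i = p)"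
    proof
      assume "C2 N (pad a P) - C2 N (pad a (\<lambda>_. p)) = 0"
      then have "(\<Sum>j=1..a. (d j)^2) - 2 * (\<Sum>j=1..a. int j * d j) = 0" unfolding eq by (simp only: of_int_eq_0_iff)
      then have "(\<Sum>j=1..a. (d j)^2) = 0" using ch sq by linarith
      then show "\<forall>i\<in>{1..a}. P i = p" using zero_iff d_def by auto
    next
      assume "\<forall>i\<in>{1..a}. P i = p"
      then have "\<forall>i\<in>{1..a}. d i = 0" by (simp add: d_def)
      then show "C2 N (pad a P) - C2 N (pad a (\<lambda>_. p)) = 0" unfolding eq by simp
    qed
  qed
qed

end
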